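(* Let $k$ be a positive integer such that $k+1$ is an odd prime, and let $p>k(k+1)$ be an odd prime. For every $\mathbf v\in N_k$ there exist $s\in\mathbb{Z}_{k+1}$ and $r\in\mathbb{Z}$ such that, working modulo $k+1$, every coordinate of $s\mathbf v+\mathbf r_k\!\left(\tfrac{r}{p}\right)$ lies in $\{1,\ldots,k-1\}$.
   Context: $\mathbb{Z}_{k+1}$ is the integers modulo $k+1$. $N_k:=\{\mathbf v\in\mathbb{Z}_{k+1}^k:\ \mathbf v\neq\mathbf 0 \text{ and } \mathbf v \text{ has at least one zero coordinate}\}$. For $x\in\mathbb{R}$, $\{x\}=x-\lfloor x\rfloor$ is the fractional part, and for $t\in\mathbb{R}$, $\mathbf r_k(t):=\big(\lfloor (k+1)\{t\}\rfloor,\lfloor (k+1)\{2t\}\rfloor,\ldots,\lfloor (k+1)\{kt\}\rfloor\big)\in\{0,\ldots,k\}^k$, reduced modulo $k+1$ when added to elements of $\mathbb{Z}_{k+1}^k$. *)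

theory Defs
  imports Complex_Main "HOL-Computational_Algebra.Primes"
begin

text \<open>Elements of Z_{k+1}^k are represented as functions nat => int, coordinates
indexed by 1..k with values in the residues 0..k, and value 0 outside 1..k.\<close>

definition Nk :: "nat \<Rightarrow> (nat \<Rightarrow> int) set" where
  "Nk k = {v. (\<forall>j. (1 \<le> j \<and> j \<le> k \<longrightarrow> v j \<in> {0..int k}) \<and>
                   (\<not> (1 \<le> j \<and> j \<le> k) \<longrightarrow> v j = 0))
            \<and> (\<exists>j\<in>{1..k}. v j \<noteq> 0)
            \<and> (\<exists>j\<in>{1..k}. v j = 0)}"

definition rk :: "nat \<Rightarrow> real \<Rightarrow> nat \<Rightarrow> int" where
  "rk k t j = \<lfloor>(real k + 1) * frac (real j * t)\<rfloor>"

end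

theory Submission
  imports Defs "HOL-Number_Theory.Number_Theory" "HOL-Computational_Algebra.Polynomial"
begin


lemma rk_value:
  fixes k p j :: nat and a :: int
  assumes "k > 0" "p > k * (k + 1)" "1 \<le> j" "j \<le> k"
  shows "rk k (real_of_int ((a * int p) div (int k + 1) + 1) / real p) j = (a * int j) mod (int k + 1)"
proof -
  define Q where "Q = int k + 1"
  define r where "r = (a * int p) div Q + 1"
  have Qpos: "Q > 0" using Q_def by simp
  have pp: "p > 0" using assms by (metis gr0I mult_is_0 not_less_zero)
  have d1: "Q * ((a * int p) div Q) \<le> a * int p" using Qpos
    by (metis mult.commute mult_div_mod_eq le_add_same_cancel1 pos_mod_sign)
  have d2: "a * int p < Q * ((a * int p) div Q) + Q" using Qpos
    by (metis add_less_cancel_left mult_div_mod_eq pos_mod_bound)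
  have b1: "a * int p < Q * r" using d2 r_def by (simp add: algebra_simps)
  have b2: "Q * r \<le> a * int p + Q" using d1 r_def by (simp add: algebra_simps)
  have jq: "int j * Q < int p"
  proof -
    have "j * (k+1) \<le> k * (k+1)" using assms(4) by (rule mult_right_mono) simp
    then have "j * (k+1) < p" using assms by linarith
    then show ?thesis unfolding Q_def by (metis of_nat_Suc of_nat_less_iff of_nat_mult Suc_eq_plus1 add.commute)
  qed
  have c1: "a * int j * int p \<le> Q * (int j * r)"
  proof -
    have "int j * (a * int p) \<le> int j * (Q * r)" using b1 by (intro mult_left_mono) auto
    then show ?thesis by (simp add: algebra_simps)
  qed
  have c2: "Q * (int j * r) < (a * int j + 1) * int p"
  proof -
    have "int j * (Q * r) \<le> int j * (a * int p + Q)" using b2 by (intro mult_left_mono) auto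
    then show ?thesis using jq by (simp add: algebra_simps)
  qed
  define X where "X = real j * (real_of_int r / real p)"
  define y where "y = (real k + 1) * X"
  have y_eq: "y = real_of_int (Q * (int j * r)) / real p"
    unfolding y_def X_def Q_def by simp
  have fy: "\<lfloor>y\<rfloor> = a * int j"
  proof -
    have "real_of_int (a * int j) * real p \<le> real_of_int (Q * (int j * r))"
      using c1[THEN of_int_le_iff[where 'a=real, THEN iffD2]] by simp
    moreover have "real_of_int (Q * (int j * r)) < (real_of_int (a * int j) + 1) * real p"
      using c2[THEN of_int_less_iff[where 'a=real, THEN iffD2]] by simp
    ultimately show ?thesis unfolding y_eq using pp
      by (simp add: floor_eq_iff pos_le_divide_eq pos_divide_less_eq)
  qed
  have XQ: "X = y / real_of_int Q" unfolding y_def Q_def by simp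
  have fX: "\<lfloor>X\<rfloor> = (a * int j) div Q"
    using XQ floor_divide_real_eq_div[of Q y] Qpos fy by simp
  have "(real k + 1) * frac X = y - real_of_int (Q * \<lfloor>X\<rfloor>)"
    unfolding frac_def y_def Q_def by (simp add: algebra_simps)
  then have "\<lfloor>(real k + 1) * frac X\<rfloor> = \<lfloor>y\<rfloor> - Q * \<lfloor>X\<rfloor>"
    by (metis floor_diff_of_int)
  also have "\<dots> = (a * int j) mod Q" using fy fX by (simp add: mod_div_mult_eq[symmetric] algebra_simps)
  finally show ?thesis unfolding rk_def X_def r_def Q_def by simp
qed



lemma power_sum_mod_prime:
  fixes q i :: nat
  assumes q: "prime q" and i: "0 < i" "i < q - 1"
  shows "q dvd (\<Sum>x<q. x ^ i)"
proof (rule ccontr)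
  assume nd: "\<not> q dvd (\<Sum>x<q. x ^ i)"
  have q1: "1 < q" using q prime_gt_1_nat by blast
  obtain g where g: "residue_primroot q g" using prime_primitive_root_exists[OF q1 q] by blast
  have cop: "coprime q g" and og: "ord q g = q - 1"
    using g q by (auto simp: residue_primroot_def totient_prime)
  define f where "f x = (g * x) mod q" for x
  have inj: "inj_on f {..<q}"
  proof (rule inj_onI)
    fix x y assume xy: "x \<in> {..<q}" "y \<in> {..<q}" "f x = f y"
    then have "[g * x = g * y] (mod q)" unfolding f_def cong_def by simp
    then have "[x = y] (mod q)" using cop
      by (metis cong_mult_lcancel_nat coprime_commute)
    then show "x = y" using xy by (simp add: cong_def)
  qed
  have img: "f ` {..<q} = {..<q}"
    using inj q1 by (intro endo_inj_surj) (auto simp: f_def)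
  have "(\<Sum>x<q. x ^ i) = (\<Sum>x<q. f x ^ i)"
    using sum.reindex[OF inj, of "\<lambda>x. x ^ i"] img by simp
  moreover have "[(\<Sum>x<q. f x ^ i) = (\<Sum>x<q. (g * x) ^ i)] (mod q)"
    by (intro cong_sum cong_pow) (simp add: f_def cong_def)
  moreover have "(\<Sum>x<q. (g * x) ^ i) = (\<Sum>x<q. x ^ i) * g ^ i"
    unfolding power_mult_distrib sum_distrib_right by (simp add: mult.commute)
  ultimately have "[1 * (\<Sum>x<q. x ^ i) = g ^ i * (\<Sum>x<q. x ^ i)] (mod q)"
    by (metis mult.commute mult_1)
  moreover have "coprime (\<Sum>x<q. x ^ i) q"
    using nd q by (metis coprime_commute prime_imp_coprime)
  ultimately have "[1 = g ^ i] (mod q)" using cong_mult_rcancel_nat by blast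
  then have "[g ^ i = 1] (mod q)" by (simp add: cong_sym)
  then show False using ord_minimal[of i q g] og i by simp
qed



lemma sum_pow_qm1:
  fixes q :: nat assumes q: "prime q"
  shows "[int (\<Sum>x<q. x ^ (q - 1)) = int q - 1] (mod int q)"
proof -
  have q1: "1 < q" using q prime_gt_1_nat by blast
  have "[(\<Sum>x<q. x ^ (q - 1)) = (\<Sum>x<q. if x = 0 then 0 else 1)] (mod q)"
  proof (intro cong_sum)
    fix x assume x: "x \<in> {..<q}"
    show "[x ^ (q - 1) = (if x = 0 then 0 else 1)] (mod q)"
    proof (cases "x = 0")
      case True
      then have "q - 1 \<noteq> 0" using q1 by simp
      then show ?thesis using True by (simp add: power_0_left)
    next
      case False
      then have "\<not> q dvd x" using x by (auto dest: dvd_imp_le)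
      then show ?thesis using fermat_theorem[OF q] False by simp
    qed
  qed
  moreover have "(\<Sum>x<q. if x = 0 then 0 else (1::nat)) = q - 1"
  proof -
    have e: "{..<q} = insert 0 {1..<q}" using q1 by auto
    have "(\<Sum>x<q. if x = 0 then 0 else (1::nat)) = (\<Sum>x\<in>{1..<q}. if x = 0 then 0 else (1::nat))"
      by (subst e, subst sum.insert) auto
    also have "\<dots> = (\<Sum>x\<in>{1..<q}. (1::nat))" by (intro sum.cong) auto
    finally show ?thesis by simp
  qed
  ultimately have "[(\<Sum>x<q. x ^ (q - 1)) = q - 1] (mod q)" by simp
  then have "[int (\<Sum>x<q. x ^ (q - 1)) = int (q - 1)] (mod int q)"
    using cong_int_iff by blast
  then show ?thesis using q1 by (simp add: of_nat_diff)
qed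

lemma poly_sum_mod:
  fixes q :: nat and w :: "nat \<Rightarrow> int"
  assumes q: "prime q" and oq: "odd q"
  shows "[(\<Sum>\<rho><q. \<Prod>j\<in>{1..q-1}. (w j - int \<rho> * int j)) = 1] (mod int q)"
proof -
  define k where "k = q - 1"
  have q1: "1 < q" using q prime_gt_1_nat by blast
  have ek: "even k" using oq q1 unfolding k_def by simp
  define G where "G = (\<Prod>j\<in>{1..k}. [:w j, - int j:])"
  have pG: "poly G x = (\<Prod>j\<in>{1..k}. (w j - x * int j))" for x
    unfolding G_def poly_prod by simp
  have nz: "\<forall>j\<in>{1..k}. [:w j, - int j:] \<noteq> 0" by auto
  have dG: "degree G = k"
    unfolding G_def using degree_prod_eq_sum_degree[OF nz] by simp
  have lG: "poly.coeff G k = (\<Prod>j\<in>{1..k}. - int j)"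
    using lead_coeff_prod[of "\<lambda>j. [:w j, - int j:]" "{1..k}"] dG unfolding G_def by simp
  have "(\<Prod>j\<in>{1..k}. - int j) = (\<Prod>j\<in>{1..k}. (-1) * int j)" by simp
  also have "\<dots> = (-1) ^ k * (\<Prod>j\<in>{1..k}. int j)"
    by (simp only: prod.distrib prod_constant card_atLeastAtMost) simp
  also have "\<dots> = fact k" using ek by (simp add: fact_prod)
  finally have lG': "poly.coeff G k = fact k" using lG by simp
  define c where "c i = poly.coeff G i" for i
  have "(\<Sum>\<rho><q. \<Prod>j\<in>{1..k}. (w j - int \<rho> * int j)) = (\<Sum>\<rho><q. poly G (int \<rho>))"
    using pG by simp
  also have "\<dots> = (\<Sum>\<rho><q. \<Sum>i\<le>k. c i * int \<rho> ^ i)"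
    unfolding poly_altdef dG c_def by simp
  also have "\<dots> = (\<Sum>i\<le>k. c i * int (\<Sum>\<rho><q. \<rho> ^ i))"
    by (subst sum.swap) (simp add: sum_distrib_left)
  also have "\<dots> = (\<Sum>i<k. c i * int (\<Sum>\<rho><q. \<rho> ^ i)) + c k * int (\<Sum>\<rho><q. \<rho> ^ k)"
    by (simp add: lessThan_Suc_atMost[symmetric])
  finally have eq: "(\<Sum>\<rho><q. \<Prod>j\<in>{1..k}. (w j - int \<rho> * int j)) = 
     (\<Sum>i<k. c i * int (\<Sum>\<rho><q. \<rho> ^ i)) + c k * int (\<Sum>\<rho><q. \<rho> ^ k)" .
  have "int q dvd (\<Sum>i<k. c i * int (\<Sum>\<rho><q. \<rho> ^ i))"
  proof (intro dvd_sum)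
    fix i assume i: "i \<in> {..<k}"
    have "q dvd (\<Sum>\<rho><q. \<rho> ^ i)"
    proof (cases "i = 0")
      case True then show ?thesis by simp
    next
      case False then show ?thesis using power_sum_mod_prime[OF q, of i] i k_def by simp
    qed
    then have "int q dvd int (\<Sum>\<rho><q. \<rho> ^ i)" by (simp only: int_dvd_int_iff)
    then show "int q dvd c i * int (\<Sum>\<rho><q. \<rho> ^ i)" by (rule dvd_mult)
  qed
  then have A: "[(\<Sum>i<k. c i * int (\<Sum>\<rho><q. \<rho> ^ i)) = 0] (mod int q)"
    by (simp add: cong_0_iff)
  have B: "[c k * int (\<Sum>\<rho><q. \<rho> ^ k) = (-1) * (int q - 1)] (mod int q)"
    using cong_mult[OF wilson_theorem[OF q] sum_pow_qm1[OF q]] lG' unfolding c_def k_def by simp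
  have "[(-1) * (int q - 1) = 1] (mod int q)"
    by (simp add: cong_iff_dvd_diff)
  moreover have "[(\<Sum>\<rho><q. \<Prod>j\<in>{1..k}. (w j - int \<rho> * int j)) = (-1) * (int q - 1)] (mod int q)"
    unfolding eq using cong_add[OF A B] by (simp only: add_0_left)
  ultimately have "[(\<Sum>\<rho><q. \<Prod>j\<in>{1..k}. (w j - int \<rho> * int j)) = 1] (mod int q)"
    using cong_trans by blast
  then show ?thesis unfolding k_def .
qed



lemma claim1:
  fixes k \<rho> :: nat and v :: "nat \<Rightarrow> int"
  assumes q: "prime (k + 1)"
    and H: "\<And>s a :: int. \<exists>j\<in>{1..k}. (s * v j + a * int j) mod (int k + 1) \<in> {0, int k}"
    and nR: "\<forall>j\<in>{1..k}. \<not> (int k + 1) dvd (v j - int \<rho> * int j)"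
  shows "[(\<Prod>j\<in>{1..k}. (v j - int \<rho> * int j)) = -1] (mod (int k + 1))"
proof -
  define Q where "Q = int k + 1"
  have "prime (int (k + 1))" using q by (simp only: prime_nat_int_transfer)
  moreover have "int (k + 1) = Q" unfolding Q_def by simp
  ultimately have Qp: "prime Q" by simp
  define f where "f j = (v j - int \<rho> * int j) mod Q" for j
  have frange: "f j \<in> {1..int k}" if "j \<in> {1..k}" for j
  proof -
    have a: "f j \<ge> 0" "f j < int k + 1" unfolding f_def Q_def
      using pos_mod_bound[of "int k + 1"] pos_mod_sign[of "int k + 1"] by auto
    have b: "f j \<noteq> 0" using nR that unfolding f_def Q_def by (simp add: dvd_eq_mod_eq_0)
    show ?thesis using a b by auto
  qed
  have cardK: "card {1..int k} = k" by simp
  show ?thesis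
  proof (cases "inj_on f {1..k}")
    case True
    have "f ` {1..k} = {1..int k}"
      using frange True cardK by (intro card_subset_eq) (auto simp: card_image)
    also have "{1..int k} = int ` {1..k}"
      by (metis atLeastAtMost_iff image_int_atLeastAtMost of_nat_1)
    finally have img: "f ` {1..k} = int ` {1..k}" .
    have "(\<Prod>j\<in>{1..k}. f j) = (\<Prod>x\<in>f ` {1..k}. x)"
      using prod.reindex[OF True, of "\<lambda>x. x"] by simp
    also have "\<dots> = (\<Prod>x\<in>int ` {1..k}. x)" using img by simp
    also have "\<dots> = (\<Prod>j\<in>{1..k}. int j)" by (simp add: prod.reindex)
    also have "\<dots> = fact k" by (simp add: fact_prod)
    finally have pf: "(\<Prod>j\<in>{1..k}. f j) = fact k" .
    have P1: "[(\<Prod>j\<in>{1..k}. (v j - int \<rho> * int j)) = (\<Prod>j\<in>{1..k}. f j)] (mod Q)"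
      unfolding f_def by (intro cong_prod) (simp add: cong_def)
    have W: "[fact k = (-1::int)] (mod Q)"
      using wilson_theorem[OF q] unfolding Q_def by (simp add: add.commute)
    have "[(\<Prod>j\<in>{1..k}. (v j - int \<rho> * int j)) = -1] (mod Q)"
      using cong_trans[OF P1[unfolded pf] W] .
    then show ?thesis unfolding Q_def .
  next
    case False
    have "card (f ` {1..k}) < k"
      using False inj_on_iff_eq_card[of "{1..k}" f] card_image_le[of "{1..k}" f] by simp
    then have "\<not> {1..int k} \<subseteq> f ` {1..k}"
      using card_mono[of "f ` {1..k}" "{1..int k}"] cardK by auto
    then obtain c where c: "c \<in> {1..int k}" "c \<notin> f ` {1..k}" by blast
    have "\<not> Q dvd c"
    proof
      assume "Q dvd c"
      then have "Q \<le> c" using c by (intro zdvd_imp_le) auto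
      then show False using c unfolding Q_def by simp
    qed
    then have "coprime Q c" by (rule prime_imp_coprime[OF Qp])
    then have cQ: "coprime c Q" by (simp add: coprime_commute)
    from cong_solve_coprime_int[OF cQ] obtain u where u: "[c * u = 1] (mod Q)" by blast
    have "\<exists>j\<in>{1..k}. ((- u) * v j + (int \<rho> * u) * int j) mod (int k + 1) \<in> {0, int k}"
      by (rule H[of "- u" "int \<rho> * u"])
    then obtain j where j: "j \<in> {1..k}" and
      jm0: "((- u) * v j + (int \<rho> * u) * int j) mod (int k + 1) \<in> {0, int k}"
      by (rule bexE)
    have jm: "((- u) * v j + (int \<rho> * u) * int j) mod Q \<in> {0, int k}"
      using jm0 unfolding Q_def .
    define x where "x = v j - int \<rho> * int j"
    have ex: "(- u) * v j + (int \<rho> * u) * int j = - (u * x)" unfolding x_def by (simp add: algebra_simps)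
    have nu: "\<not> Q dvd u"
    proof
      assume "Q dvd u"
      then have "Q dvd c * u" by simp
      moreover have "Q dvd c * u - 1" using u by (simp add: cong_iff_dvd_diff)
      ultimately have "Q dvd (c * u) - (c * u - 1)" by (rule dvd_diff)
      then have "Q dvd 1" by simp
      then show False using Qp not_prime_unit by blast
    qed
    show ?thesis
    proof (cases "(- (u * x)) mod Q = 0")
      case True
      then have "Q dvd - (u * x)" by (rule dvd_eq_mod_eq_0[THEN iffD2])
      then have "Q dvd u * x" by (simp only: dvd_minus_iff)
      then have "Q dvd x" using nu Qp by (simp add: prime_dvd_mult_iff)
      moreover have "\<not> Q dvd x" using bspec[OF nR j] unfolding x_def Q_def .
      ultimately show ?thesis by contradiction
    next
      case False
      have "(- (u * x)) mod Q \<in> {0, int k}" using jm ex by simp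
      then have "(- (u * x)) mod Q = int k" using False by simp
      then have "(- (u * x)) mod Q = Q - 1" unfolding Q_def by simp
      then have "[- (u * x) = -1] (mod Q)"
        unfolding cong_def using zmod_minus1[of Q] prime_gt_1_int[OF Qp] by simp
      then have "[u * x = 1] (mod Q)" by (simp only: cong_minus_minus_iff)
      then have A1: "[c * (u * x) = c] (mod Q)" using cong_scalar_left[of "u * x" 1 Q c] by simp
      have A2: "[c * (u * x) = x] (mod Q)"
        using cong_scalar_right[OF u, of x] by (simp add: mult.assoc)
      have "[x = c] (mod Q)" using cong_trans[OF cong_sym[OF A2] A1] .
      then have "f j = c mod Q" unfolding f_def x_def cong_def by simp
      also have "\<dots> = c" using c unfolding Q_def by simp
      finally have "f j = c" .
      then have "c \<in> f ` {1..k}" using j by (metis image_eqI)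
      then show ?thesis using c(2) by blast
    qed
  qed
qed



lemma good_pair:
  fixes k :: nat and v :: "nat \<Rightarrow> int"
  assumes k0: "k > 0" and q: "prime (k + 1)" and oq: "odd (k + 1)" and vN: "v \<in> Nk k"
  shows "\<exists>s a :: int. \<forall>j\<in>{1..k}. (s * v j + a * int j) mod (int k + 1) \<notin> {0, int k}"
proof (rule ccontr)
  assume nt: "\<not> ?thesis"
  have H: "\<exists>j\<in>{1..k}. (s * v j + a * int j) mod (int k + 1) \<in> {0, int k}" for s a :: int
    using nt by auto
  define Q where "Q = int k + 1"
  have "prime (int (k + 1))" using q by (simp only: prime_nat_int_transfer)
  moreover have "int (k + 1) = Q" unfolding Q_def by simp
  ultimately have Qp: "prime Q" by simp
  have vN': "(\<forall>j. (1 \<le> j \<and> j \<le> k \<longrightarrow> v j \<in> {0..int k}) \<and>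
                   (\<not> (1 \<le> j \<and> j \<le> k) \<longrightarrow> v j = 0))
            \<and> (\<exists>j\<in>{1..k}. v j \<noteq> 0)
            \<and> (\<exists>j\<in>{1..k}. v j = 0)" using vN unfolding Nk_def by (rule CollectD)
  have vr: "v j \<in> {0..int k}" if "j \<in> {1..k}" for j
  proof -
    have "1 \<le> j \<and> j \<le> k \<longrightarrow> v j \<in> {0..int k}" using vN' by blast
    then show ?thesis using that by simp
  qed
  have "\<exists>j\<in>{1..k}. v j = 0" using vN' by blast
  then obtain j0 where j0: "j0 \<in> {1..k}" "v j0 = 0" by (rule bexE)
  have "\<exists>j\<in>{1..k}. v j \<noteq> 0" using vN' by blast
  then obtain j1 where j1: "j1 \<in> {1..k}" "v j1 \<noteq> 0" by (rule bexE)
  have ndj: "\<not> Q dvd int j" if "j \<in> {1..k}" for j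
  proof
    assume "Q dvd int j"
    then have "Q \<le> int j" using that by (intro zdvd_imp_le) auto
    then show False using that unfolding Q_def by simp
  qed
  define R where "R = {\<rho> \<in> {..<k+1}. \<exists>j\<in>{1..k}. Q dvd (v j - int \<rho> * int j)}"
  define P where "P \<rho> = (\<Prod>j\<in>{1..k}. (v j - int \<rho> * int j))" for \<rho> :: nat
  have RS: "R \<subseteq> {..<k+1}" unfolding R_def by auto
  have finR: "finite R" using RS finite_subset by blast
  have c1: "[P \<rho> = (if \<rho> \<in> R then 0 else -1)] (mod Q)" if "\<rho> \<in> {..<k+1}" for \<rho>
  proof (cases "\<rho> \<in> R")
    case True
    then obtain j where j: "j \<in> {1..k}" "Q dvd (v j - int \<rho> * int j)" unfolding R_def by blast
    have "(v j - int \<rho> * int j) dvd P \<rho>" unfolding P_def using j(1) by (intro dvd_prodI) auto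
    then have "Q dvd P \<rho>" using j(2) by (rule dvd_trans[rotated])
    then show ?thesis using True by (simp add: cong_0_iff)
  next
    case False
    then have nR: "\<forall>j\<in>{1..k}. \<not> (int k + 1) dvd (v j - int \<rho> * int j)"
      using that unfolding R_def Q_def by auto
    have "[P \<rho> = -1] (mod (int k + 1))" unfolding P_def
      by (rule claim1[OF q H nR])
    then show ?thesis using False unfolding Q_def by simp
  qed
  have S1: "[(\<Sum>\<rho><k+1. P \<rho>) = (\<Sum>\<rho><k+1. (if \<rho> \<in> R then 0 else -1))] (mod Q)"
    using c1 by (intro cong_sum) auto
  have "(\<Sum>\<rho><k+1. (if \<rho> \<in> R then 0 else (-1::int))) = - int (card ({..<k+1} - R))"
  proof -
    have "(\<Sum>\<rho><k+1. (if \<rho> \<in> R then 0 else (-1::int))) =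
        (\<Sum>\<rho>\<in>{..<k+1} \<inter> R. 0) + (\<Sum>\<rho>\<in>{..<k+1} \<inter> - R. (-1::int))"
      using sum.If_cases[OF finite_lessThan[of "k+1"], of "\<lambda>\<rho>. \<rho> \<in> R" "\<lambda>_. 0" "\<lambda>_. -1::int"]
      by (simp only: Collect_mem_eq)
    also have "\<dots> = - int (card ({..<k+1} \<inter> - R))" by simp
    also have "{..<k+1} \<inter> - R = {..<k+1} - R" by blast
    finally show ?thesis .
  qed
  also have "card ({..<k+1} - R) = k + 1 - card R" using RS finR by (simp add: card_Diff_subset)
  finally have S2: "(\<Sum>\<rho><k+1. (if \<rho> \<in> R then 0 else (-1::int))) = - int (k + 1 - card R)" .
  have S3: "[(\<Sum>\<rho><k+1. P \<rho>) = 1] (mod Q)"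
    using poly_sum_mod[OF q oq, of v] unfolding P_def Q_def by (simp add: add.commute)
  have S4: "[- int (k + 1 - card R) = 1] (mod Q)"
    using cong_trans[OF cong_sym[OF S1] S3] S2 by simp
  have cardA: "card {\<rho> \<in> {..<k+1}. Q dvd (v j - int \<rho> * int j)} \<le> 1" if j: "j \<in> {1..k}" for j
  proof -
    have "\<rho>1 = \<rho>2" if a: "\<rho>1 \<in> {\<rho> \<in> {..<k+1}. Q dvd (v j - int \<rho> * int j)}"
         and b: "\<rho>2 \<in> {\<rho> \<in> {..<k+1}. Q dvd (v j - int \<rho> * int j)}" for \<rho>1 \<rho>2
    proof (rule ccontr)
      assume ne: "\<rho>1 \<noteq> \<rho>2"
      have a': "Q dvd v j - int \<rho>1 * int j" using a by simp
      have b': "Q dvd v j - int \<rho>2 * int j" using b by simp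
      have "Q dvd (v j - int \<rho>2 * int j) - (v j - int \<rho>1 * int j)"
        by (rule dvd_diff[OF b' a'])
      moreover have "(v j - int \<rho>2 * int j) - (v j - int \<rho>1 * int j) = (int \<rho>1 - int \<rho>2) * int j"
        by (simp add: algebra_simps)
      ultimately have "Q dvd (int \<rho>1 - int \<rho>2) * int j" by simp
      then have "Q dvd (int \<rho>1 - int \<rho>2)" using Qp ndj[OF j] by (simp add: prime_dvd_mult_iff)
      moreover have "int \<rho>1 - int \<rho>2 \<noteq> 0" using ne by simp
      ultimately have "\<bar>Q\<bar> \<le> \<bar>int \<rho>1 - int \<rho>2\<bar>" by (rule dvd_imp_le_int[rotated])
      then show False using a b unfolding Q_def by auto
    qed
    moreover have "finite {\<rho> \<in> {..<k+1}. Q dvd (v j - int \<rho> * int j)}" by simp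
    ultimately have "card {\<rho> \<in> {..<k+1}. Q dvd (v j - int \<rho> * int j)} \<le> Suc 0"
      using card_le_Suc0_iff_eq by blast
    then show ?thesis by simp
  qed
  have "R = (\<Union>j\<in>{1..k}. {\<rho> \<in> {..<k+1}. Q dvd (v j - int \<rho> * int j)})"
    unfolding R_def by auto
  then have "card R \<le> (\<Sum>j\<in>{1..k}. card {\<rho> \<in> {..<k+1}. Q dvd (v j - int \<rho> * int j)})"
    using card_UN_le[of "{1..k}"] by simp
  also have "\<dots> \<le> (\<Sum>j\<in>{1..k}. 1)" using cardA by (intro sum_mono) auto
  finally have cRk: "card R \<le> k" by simp
  have "Q dvd (v j0 - int 0 * int j0)" using j0 by simp
  moreover have "(0::nat) \<in> {..<k+1}" by simp
  ultimately have zR: "0 \<in> R" unfolding R_def using j0(1) by blast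
  have "\<not> Q dvd int j1" using ndj[OF j1(1)] .
  then have "coprime Q (int j1)" by (rule prime_imp_coprime[OF Qp])
  then have cj: "coprime (int j1) Q" by (simp add: coprime_commute)
  from cong_solve_coprime_int[OF cj] obtain u where u: "[int j1 * u = 1] (mod Q)" by blast
  define \<rho>1 where "\<rho>1 = nat ((v j1 * u) mod Q)"
  have Qpos: "Q > 0" unfolding Q_def by simp
  have r1: "int \<rho>1 = (v j1 * u) mod Q" unfolding \<rho>1_def using Qpos by simp
  have r1lt: "\<rho>1 < k + 1" using r1 Qpos pos_mod_bound[OF Qpos, of "v j1 * u"] unfolding Q_def by linarith
  have "[int \<rho>1 * int j1 = (v j1 * u) * int j1] (mod Q)" unfolding r1
    by (intro cong_scalar_right) (simp add: cong_def)
  moreover have "[(v j1 * u) * int j1 = v j1 * 1] (mod Q)"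
    using cong_scalar_left[OF u, of "v j1"] by (simp add: ac_simps)
  ultimately have "[int \<rho>1 * int j1 = v j1] (mod Q)" using cong_trans by fastforce
  then have d1: "Q dvd (v j1 - int \<rho>1 * int j1)" by (simp add: cong_iff_dvd_diff dvd_diff_commute)
  have r1R: "\<rho>1 \<in> R" unfolding R_def using r1lt j1(1) d1 by auto
  have "\<rho>1 \<noteq> 0"
  proof
    assume "\<rho>1 = 0"
    then have "Q dvd v j1" using d1 by simp
    moreover have "v j1 > 0" using vr[OF j1(1)] j1(2) by auto
    ultimately have "Q \<le> v j1" by (intro zdvd_imp_le)
    then show False using vr[OF j1(1)] unfolding Q_def by auto
  qed
  then have "{0, \<rho>1} \<subseteq> R" "card {0, \<rho>1} = 2" using zR r1R by auto
  then have c2: "2 \<le> card R" using card_mono[OF finR] by metis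
  have A: "Q dvd (- int (k + 1 - card R) - 1)" using S4 by (simp add: cong_iff_dvd_diff)
  have B: "- int (k + 1 - card R) - 1 = - (int k + 2 - int (card R))" using cRk by simp
  have "Q dvd - (int k + 2 - int (card R))" using A unfolding B .
  then have "Q dvd (int k + 2 - int (card R))" by (simp only: dvd_minus_iff)
  then have "Q \<le> int k + 2 - int (card R)" using cRk by (intro zdvd_imp_le) auto
  then show False using c2 unfolding Q_def by simp
qed


theorem lemma4p3:
  fixes k p :: nat
  assumes "k > 0" and "prime (k + 1)" and "odd (k + 1)"
      and "prime p" and "odd p" and "p > k * (k + 1)"
      and "v \<in> Nk k"
  shows "\<exists>s \<in> {0..int k}. \<exists>r :: int. \<forall>j \<in> {1..k}.
           (s * v j + rk k (real_of_int r / real p) j) mod (int k + 1) \<in> {1..int k - 1}"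
proof -
  obtain s a :: int where sa: "\<forall>j\<in>{1..k}. (s * v j + a * int j) mod (int k + 1) \<notin> {0, int k}"
    using good_pair[OF assms(1,2,3,7)] by blast
  define Q where "Q = int k + 1"
  have Qpos: "Q > 0" unfolding Q_def by simp
  define r where "r = (a * int p) div (int k + 1) + 1"
  have "s mod Q \<in> {0..int k}" using pos_mod_bound[OF Qpos, of s] pos_mod_sign[OF Qpos, of s]
    unfolding Q_def by auto
  moreover have "\<forall>j \<in> {1..k}. (s mod Q * v j + rk k (real_of_int r / real p) j) mod (int k + 1) \<in> {1..int k - 1}"
  proof
    fix j assume j: "j \<in> {1..k}"
    have rkj: "rk k (real_of_int r / real p) j = (a * int j) mod Q"
      unfolding r_def Q_def using rk_value[OF assms(1) assms(6), of j a] j by simp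
    have e1: "(s mod Q * v j) mod Q = (s * v j) mod Q" by (rule mod_mult_left_eq)
    have "(s mod Q * v j + (a * int j) mod Q) mod Q = (s mod Q * v j + a * int j) mod Q"
      by (rule mod_add_right_eq)
    also have "\<dots> = ((s mod Q * v j) mod Q + a * int j) mod Q" by (rule mod_add_left_eq[symmetric])
    also have "\<dots> = ((s * v j) mod Q + a * int j) mod Q" by (simp only: e1)
    also have "\<dots> = (s * v j + a * int j) mod Q" by (rule mod_add_left_eq)
    finally have "(s mod Q * v j + (a * int j) mod Q) mod Q = (s * v j + a * int j) mod Q" .
    then have eqm: "(s mod Q * v j + rk k (real_of_int r / real p) j) mod (int k + 1) = (s * v j + a * int j) mod Q"
      unfolding rkj Q_def by simp
    have m: "(s * v j + a * int j) mod Q \<notin> {0, int k}" using bspec[OF sa j] unfolding Q_def .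
    have m0: "0 \<le> (s * v j + a * int j) mod Q" using pos_mod_sign[OF Qpos] by blast
    have m1: "(s * v j + a * int j) mod Q < Q" using pos_mod_bound[OF Qpos] by blast
    have gen: "M \<in> {1..int k - 1}" if "M \<notin> {0, int k}" "0 \<le> M" "M < Q" for M :: int
      using that unfolding Q_def by auto
    have "(s * v j + a * int j) mod Q \<in> {1..int k - 1}"
      by (rule gen[OF m m0 m1])
    then show "(s mod Q * v j + rk k (real_of_int r / real p) j) mod (int k + 1) \<in> {1..int k - 1}"
      unfolding eqm .
  qed
  ultimately show ?thesis by blast
qed

end
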